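(* Let $n\in\mathbb{N}$ and let $A,B\in M_n(\mathbb{C})$ be unitary matrices. For $\lambda\in\mathbb{T}$ define the $2n\times 2n$ matrices \[S_\lambda=\begin{pmatrix}A&\lambda B\\ B&A\end{pmatrix},\qquad T_\lambda=\begin{pmatrix}B&A\\ \bar\lambda A&B\end{pmatrix}.\] Then for every $\lambda\in\mathbb{T}$ the matrices $S_\lambda$ and $T_\lambda$ commute, and \[\inf_{\lambda\in\mathbb{T}}\max\{\|S_\lambda\|,\|T_\lambda\|\}\leq\sqrt{2+2\sin\bigl(\tfrac{\pi}{2}(1-\tfrac1n)\bigr)}.\]
   Context: $\mathbb{T}$ is the unit circle in $\mathbb{C}$ and $\|\cdot\|$ is the operator norm. *)

theory Defs
  imports "HOL-Analysis.Analysis"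
begin

definition adjoint_cmat :: "complex^'n^'n \<Rightarrow> complex^'n^'n" where
  "adjoint_cmat A = (\<chi> i j. cnj (A $ j $ i))"

definition unitary_cmat :: "complex^'n^'n \<Rightarrow> bool" where
  "unitary_cmat A \<longleftrightarrow> A ** adjoint_cmat A = mat 1 \<and> adjoint_cmat A ** A = mat 1"

definition block2 :: "complex^'n^'n \<Rightarrow> complex^'n^'n \<Rightarrow> complex^'n^'n \<Rightarrow> complex^'n^'n
    \<Rightarrow> complex^('n + 'n)^('n + 'n)" where
  "block2 P Q R S = (\<chi> i j. (case i of
      Inl a \<Rightarrow> (case j of Inl b \<Rightarrow> P $ a $ b | Inr b \<Rightarrow> Q $ a $ b)
    | Inr a \<Rightarrow> (case j of Inl b \<Rightarrow> R $ a $ b | Inr b \<Rightarrow> S $ a $ b)))"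

definition cmat_scale :: "complex \<Rightarrow> complex^'n^'m \<Rightarrow> complex^'n^'m" where
  "cmat_scale c A = (\<chi> i j. c * A $ i $ j)"

definition op_norm :: "complex^'m^'m \<Rightarrow> real" where
  "op_norm M = onorm (\<lambda>x. M *v x)"

end

theory Submission
  imports Defs
begin



definition cinner :: "complex^'n \<Rightarrow> complex^'n \<Rightarrow> complex" where
  "cinner x y = (\<Sum>i\<in>UNIV. cnj (x$i) * y$i)"

lemma Re_cinner: "Re (cinner x y) = inner x y"
  by (simp add: cinner_def inner_vec_def inner_complex_def Re_sum)

lemma cinner_self: "cinner x x = complex_of_real ((norm x)^2)"
proof -
  have "(norm x)^2 = (\<Sum>i\<in>UNIV. (cmod (x$i))^2)"
    by (simp add: norm_vec_def L2_set_def sum_nonneg)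
  then have "complex_of_real ((norm x)^2) = (\<Sum>i\<in>UNIV. complex_of_real ((cmod (x$i))^2))"
    by simp
  also have "\<dots> = (\<Sum>i\<in>UNIV. cnj (x$i) * x$i)"
    by (intro sum.cong refl) (metis complex_norm_square mult.commute)
  finally show ?thesis by (simp add: cinner_def)
qed

lemma cinner_cnj: "cnj (cinner x y) = cinner y x"
  by (simp add: cinner_def mult.commute)

lemma cinner_add_right: "cinner x (y + z) = cinner x y + cinner x z"
  by (simp add: cinner_def distrib_left sum.distrib)

lemma cinner_add_left: "cinner (x + y) z = cinner x z + cinner y z"
  by (simp add: cinner_def distrib_right sum.distrib)

lemma cinner_diff_right: "cinner x (y - z) = cinner x y - cinner x z"
  by (simp add: cinner_def right_diff_distrib sum_subtractf)

lemma cinner_diff_left: "cinner (x - y) z = cinner x z - cinner y z"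
  by (simp add: cinner_def left_diff_distrib sum_subtractf)

lemma cinner_scale_right: "cinner x (c *s y) = c * cinner x y"
  by (simp add: cinner_def sum_distrib_left algebra_simps)

lemma cinner_scale_left: "cinner (c *s x) y = cnj c * cinner x y"
  by (simp add: cinner_def sum_distrib_left algebra_simps)

lemma cinner_zero_left[simp]: "cinner 0 y = 0" and cinner_zero_right[simp]: "cinner x 0 = 0"
  by (simp_all add: cinner_def)

lemma cinner_sum_right: "cinner x (\<Sum>e\<in>E. f e) = (\<Sum>e\<in>E. cinner x (f e))"
  by (simp add: cinner_def sum_component sum_distrib_left) (rule sum.swap)

lemma cinner_sum_left: "cinner (\<Sum>e\<in>E. f e) y = (\<Sum>e\<in>E. cinner (f e) y)"
  by (simp add: cinner_def sum_component sum_distrib_right cnj_sum) (rule sum.swap)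

lemma cinner_adjoint: "cinner (A *v x) y = cinner x (adjoint_cmat A *v y)"
proof -
  have "cinner (A *v x) y = (\<Sum>i\<in>UNIV. \<Sum>j\<in>UNIV. cnj (A$i$j) * cnj (x$j) * y$i)"
    by (simp add: cinner_def matrix_vector_mult_def cnj_sum sum_distrib_right)
  also have "\<dots> = (\<Sum>j\<in>UNIV. \<Sum>i\<in>UNIV. cnj (A$i$j) * cnj (x$j) * y$i)"
    by (rule sum.swap)
  also have "\<dots> = cinner x (adjoint_cmat A *v y)"
    by (simp add: cinner_def matrix_vector_mult_def adjoint_cmat_def sum_distrib_left mult_ac)
  finally show ?thesis .
qed

lemma cinner_adjoint2: "cinner x (A *v y) = cinner (adjoint_cmat A *v x) y"
  using cinner_adjoint[of A y x] by (metis cinner_cnj)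

lemma adjoint_adjoint[simp]: "adjoint_cmat (adjoint_cmat A) = A"
  by (simp add: adjoint_cmat_def vec_eq_iff)

lemma adjoint_mult: "adjoint_cmat (A ** B) = adjoint_cmat B ** adjoint_cmat A"
  by (simp add: adjoint_cmat_def vec_eq_iff matrix_matrix_mult_def mult.commute)

lemma unitary_mult: "unitary_cmat A \<Longrightarrow> unitary_cmat B \<Longrightarrow> unitary_cmat (A ** B)"
proof -
  assume a: "unitary_cmat A" "unitary_cmat B"
  have "(A ** B) ** (adjoint_cmat B ** adjoint_cmat A) = A ** ((B ** adjoint_cmat B) ** adjoint_cmat A)"
    by (simp add: matrix_mul_assoc)
  also have "\<dots> = mat 1" using a by (simp add: unitary_cmat_def matrix_mul_lid)
  finally have 1: "(A ** B) ** (adjoint_cmat B ** adjoint_cmat A) = mat 1" .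
  have "(adjoint_cmat B ** adjoint_cmat A) ** (A ** B) = adjoint_cmat B ** ((adjoint_cmat A ** A) ** B)"
    by (simp add: matrix_mul_assoc)
  also have "\<dots> = mat 1" using a by (simp add: unitary_cmat_def matrix_mul_lid)
  finally have 2: "(adjoint_cmat B ** adjoint_cmat A) ** (A ** B) = mat 1" .
  show ?thesis using 1 2 by (simp add: unitary_cmat_def adjoint_mult)
qed

lemma unitary_adjoint: "unitary_cmat A \<Longrightarrow> unitary_cmat (adjoint_cmat A)"
  unfolding unitary_cmat_def by simp

lemma unitary_cinner: "unitary_cmat A \<Longrightarrow> cinner (A *v x) (A *v y) = cinner x y"
  unfolding unitary_cmat_def by (simp add: cinner_adjoint matrix_vector_mul_assoc)

lemma unitary_norm: "unitary_cmat A \<Longrightarrow> norm (A *v x) = norm x"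
  using unitary_cinner[of A x x] unfolding cinner_self of_real_eq_iff
  by (simp add: power2_eq_iff_nonneg)

lemma unitary_inv1: "unitary_cmat A \<Longrightarrow> adjoint_cmat A *v (A *v x) = x"
  unfolding unitary_cmat_def by (simp add: matrix_vector_mul_assoc)

lemma unitary_inv2: "unitary_cmat A \<Longrightarrow> A *v (adjoint_cmat A *v x) = x"
  unfolding unitary_cmat_def by (simp add: matrix_vector_mul_assoc)




lemma gap_real:
  fixes P :: "real set"
  shows "finite P \<Longrightarrow> P \<subseteq> {a..<c} \<Longrightarrow> a \<in> P \<Longrightarrow> card P \<le> m \<Longrightarrow> 1 \<le> m \<Longrightarrow>
    \<exists>p\<in>P. (\<forall>q\<in>P. q \<le> p \<or> p + (c-a)/m \<le> q) \<and> p + (c-a)/m \<le> c"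
proof (induction m arbitrary: P c)
  case 0
  then show ?case by simp
next
  case (Suc m)
  have ac: "a < c" using Suc.prems by auto
  define M where "M = Max P"
  have MP: "M \<in> P" using Suc.prems M_def by (metis Max_in empty_iff)
  have Mge: "\<forall>q\<in>P. q \<le> M" using Suc.prems M_def by simp
  show ?case
  proof (cases "M + (c-a)/Suc m \<le> c")
    case True
    then show ?thesis using MP Mge by blast
  next
    case False
    have aM: "a \<noteq> M"
    proof
      assume "a = M"
      have "(c-a)/Suc m \<le> (c-a)/1"
        by (rule divide_left_mono) (use ac in auto)
      then have "M + (c-a)/Suc m \<le> M + (c - a)" by simp
      then show False using False \<open>a = M\<close> by simp
    qed
    define P' where "P' = P - {M}"
    have cardP': "card P' \<le> m" using Suc.prems MP P'_def by (simp add: card_Diff_singleton)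
    have "a \<in> P'" using aM Suc.prems P'_def by auto
    then have "card P' \<noteq> 0" using Suc.prems P'_def by auto
    then have m1: "1 \<le> m" using cardP' by linarith
    have sub: "P' \<subseteq> {a..<M}" using Suc.prems Mge P'_def by force
    obtain p where pP: "p \<in> P'" and p1: "\<forall>q\<in>P'. q \<le> p \<or> p + (M-a)/m \<le> q"
      and p2: "p + (M-a)/m \<le> M"
      using Suc.IH[of P' M] Suc.prems(1) P'_def cardP' m1 sub \<open>a \<in> P'\<close> by auto
    have key: "(c-a)/Suc m \<le> (M-a)/m"
    proof -
      have "c - (c-a)/Suc m < M" using False by simp
      then have "(c-a) * m / Suc m < M - a"
        by (simp add: field_simps)
      then have "(c-a) * m < (M - a) * Suc m" by (simp add: field_simps)
      then show ?thesis using m1 by (simp add: field_simps)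
    qed
    show ?thesis
    proof (intro bexI conjI ballI)
      show "p \<in> P" using pP P'_def by auto
      show "p + (c - a) / real (Suc m) \<le> c"
        using key p2 Mge MP Suc.prems(2) by force
    next
      fix q assume "q \<in> P"
      show "q \<le> p \<or> p + (c - a) / real (Suc m) \<le> q"
      proof (cases "q = M")
        case True then show ?thesis using key p2 by auto
      next
        case False then show ?thesis using p1 key \<open>q \<in> P\<close> P'_def by force
      qed
    qed
  qed
qed

lemma cos_le_gap:
  fixes n :: nat
  assumes "1 \<le> n" "pi / n \<le> x" "x \<le> 2*pi - pi/n"
  shows "cos x \<le> cos (pi / n)"
proof -
  have pn: "0 < pi / n" "pi / n \<le> pi" using assms(1) by (auto simp: field_simps)
  show ?thesis
  proof (cases "x \<le> pi")
    case True
    then show ?thesis using cos_mono_le_eq[of x "pi/n"] pn assms by auto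
  next
    case False
    have "cos x = cos (2*pi - x)" by (simp add: cos_diff)
    also have "\<dots> \<le> cos (pi / n)"
      using cos_mono_le_eq[of "2*pi - x" "pi/n"] pn assms False by auto
    finally show ?thesis .
  qed
qed

definition ang :: "complex \<Rightarrow> real" where
  "ang z = (if Arg z < 0 then Arg z + 2*pi else Arg z)"

lemma ang_range: "0 \<le> ang z \<and> ang z < 2*pi"
  using Arg_bounded[of z] by (auto simp: ang_def)

lemma cis_ang: "cmod z = 1 \<Longrightarrow> cis (ang z) = z"
proof -
  assume z: "cmod z = 1"
  then have "z \<noteq> 0" by auto
  then have "cis (Arg z) = z" using z by (simp add: cis_Arg sgn_div_norm)
  moreover have "cis (Arg z + 2*pi) = cis (Arg z)"
    by (simp add: cis.ctr)
  ultimately show ?thesis by (simp add: ang_def)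
qed

lemma gap_circle:
  fixes Z :: "complex set"
  assumes "finite Z" "card Z \<le> n" "1 \<le> n" "\<forall>z\<in>Z. cmod z = 1"
  shows "\<exists>\<mu>. cmod \<mu> = 1 \<and> (\<forall>z\<in>Z. Re (\<mu> * z) \<le> cos (pi / n))"
proof (cases "Z = {}")
  case True
  then show ?thesis by (intro exI[of _ 1]) auto
next
  case False
  define P where "P = ang ` Z"
  define a where "a = Min P"
  have finP: "finite P" using assms P_def by auto
  have "P \<noteq> {}" using False P_def by auto
  then have aP: "a \<in> P" using finP a_def by simp
  have a0: "0 \<le> a" using aP ang_range P_def by auto
  have sub: "P \<subseteq> {a..<a + 2*pi}"
  proof
    fix x assume xP: "x \<in> P"
    then have "a \<le> x" using finP a_def by simp
    moreover have "x < 2*pi" using xP P_def ang_range by auto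
    ultimately show "x \<in> {a..<a + 2*pi}" using a0 by auto
  qed
  have cP: "card P \<le> n" using assms card_image_le P_def by (metis le_trans)
  obtain p where pP: "p \<in> P" and p1: "\<forall>q\<in>P. q \<le> p \<or> p + (a + 2*pi - a)/n \<le> q"
    and p2: "p + (a + 2*pi - a)/n \<le> a + 2*pi"
    using gap_real[OF finP sub aP cP assms(3)] by blast
  have pa: "a \<le> p" using pP sub by auto
  define s where "s = p + pi / n"
  show ?thesis
  proof (intro exI[of _ "cis (-s)"] conjI ballI)
    show "cmod (cis (- s)) = 1" by simp
  next
    fix z assume zZ: "z \<in> Z"
    define q where "q = ang z"
    have qP: "q \<in> P" using zZ q_def P_def by auto
    have "cis (-s) * z = cis (-s) * cis q" using cis_ang assms(4) zZ q_def by simp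
    also have "\<dots> = cis (q - s)" by (simp add: cis_mult)
    finally have "Re (cis (-s) * z) = cos (q - s)" by simp
    also have "\<dots> \<le> cos (pi / n)"
    proof (cases "q \<le> p")
      case True
      have "cos (q - s) = cos (q - s + 2*pi)" by (simp add: cos_add)
      also have "\<dots> \<le> cos (pi / n)"
      proof (rule cos_le_gap[OF assms(3)])
        show "pi / n \<le> q - s + 2*pi" using p2 qP sub s_def by (auto simp: field_simps)
        show "q - s + 2*pi \<le> 2*pi - pi/n" using True s_def by auto
      qed
      finally show ?thesis .
    next
      case False
      then have q2: "p + 2*pi/n \<le> q" using p1 qP by auto
      show ?thesis
      proof (rule cos_le_gap[OF assms(3)])
        show "pi / n \<le> q - s" using q2 s_def by auto
        show "q - s \<le> 2*pi - pi/n" using qP sub pa s_def by auto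
      qed
    qed
    finally show "Re (cis (- s) * z) \<le> cos (pi / real n)" .
  qed
qed




lemma scaleR_as_s: "r *\<^sub>R (x :: complex^'n) = complex_of_real r *s x"
proof (rule iffD2[OF vec_eq_iff], rule allI)
  fix i
  have "(r *\<^sub>R x) $ i = r *\<^sub>R (x $ i)" by simp
  also have "\<dots> = complex_of_real r * x $ i" by (rule scaleR_conv_of_real)
  finally show "(r *\<^sub>R x) $ i = (complex_of_real r *s x) $ i" by simp
qed

lemma mvs: "(A :: complex^'n^'m) *v (r *\<^sub>R x) = r *\<^sub>R (A *v x)"
  by (simp add: scaleR_as_s vector_scalar_commute)

lemma cinner_s_self: "cinner (c *s x) (c *s x) = complex_of_real ((cmod c)^2) * cinner x x"
  by (metis cinner_scale_left cinner_scale_right complex_norm_square mult.assoc mult.commute)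

lemma eigvec_exists:
  fixes W :: "complex^'n^'n" and V :: "(complex^'n) set"
  assumes U: "unitary_cmat W"
    and Vadd: "\<And>x y. x \<in> V \<Longrightarrow> y \<in> V \<Longrightarrow> x + y \<in> V"
    and Vscale: "\<And>x c. x \<in> V \<Longrightarrow> c *s x \<in> V"
    and Vcl: "closed V"
    and VW: "\<And>x. x \<in> V \<Longrightarrow> W *v x \<in> V"
    and VWs: "\<And>x. x \<in> V \<Longrightarrow> adjoint_cmat W *v x \<in> V"
    and v: "v \<in> V" "v \<noteq> 0"
  shows "\<exists>u\<in>V. u \<noteq> 0 \<and> (\<exists>z. W *v u = z *s u)"
proof -
  define Ws where "Ws = adjoint_cmat W"
  have VR: "r *\<^sub>R x \<in> V" if "x \<in> V" for r x using Vscale that by (simp add: scaleR_as_s)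
  have Vdiff: "x - y \<in> V" if "x \<in> V" "y \<in> V" for x y
    using Vadd[OF that(1) VR[OF that(2), of "-1"]] by simp
  define f where "f u = inner u (W *v u)" for u
  define S where "S = V \<inter> sphere 0 1"
  have cS: "compact S" unfolding S_def
    by (intro closed_Int_compact Vcl compact_sphere)
  have "(1 / norm v) *\<^sub>R v \<in> S" using v VR by (simp add: S_def)
  then have neS: "S \<noteq> {}" by auto
  have cf: "continuous_on S f" unfolding f_def
    by (intro continuous_on_inner continuous_on_id linear_continuous_on matrix_vector_mul_bounded_linear)
  obtain v0 where v0S: "v0 \<in> S" and v0max: "\<forall>y\<in>S. f y \<le> f v0"
    using continuous_attains_sup[OF cS neS cf] by blast
  define m where "m = f v0"
  have v0V: "v0 \<in> V" and nv0: "norm v0 = 1" using v0S by (auto simp: S_def)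
  have fscale: "f (r *\<^sub>R u) = r^2 * f u" for r u
    by (simp add: f_def mvs power2_eq_square)
  have fle: "f u \<le> m * (norm u)^2" if "u \<in> V" for u
  proof (cases "u = 0")
    case True then show ?thesis by (simp add: f_def)
  next
    case False
    define u' where "u' = (1 / norm u) *\<^sub>R u"
    have "u' \<in> S" using False VR[OF that] by (simp add: S_def u'_def)
    then have "f u' \<le> m" using v0max m_def by auto
    moreover have "u = norm u *\<^sub>R u'" using False by (simp add: u'_def)
    then have "f u = (norm u)^2 * f u'" using fscale by metis
    ultimately show ?thesis by (metis mult.commute mult_right_mono zero_le_power2)
  qed
  have fWs: "inner x (Ws *v x) = f x" for x
  proof -
    have "inner x (Ws *v x) = Re (cinner x (Ws *v x))" by (simp add: Re_cinner)
    also have "\<dots> = Re (cinner (W *v x) x)" by (simp add: Ws_def cinner_adjoint)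
    also have "\<dots> = Re (cnj (cinner x (W *v x)))" by (simp add: cinner_cnj)
    also have "\<dots> = f x" by (simp add: Re_cinner f_def)
    finally show ?thesis .
  qed
  have adjW: "inner x (W *v y) = inner (Ws *v x) y" for x y
    by (simp add: Ws_def cinner_adjoint2 flip: Re_cinner)
  have adjWs: "inner x (Ws *v y) = inner (W *v x) y" for x y
    by (simp add: Ws_def cinner_adjoint2 flip: Re_cinner)
  define P where "P u = m *\<^sub>R u - (1/2) *\<^sub>R (W *v u + Ws *v u)" for u
  have PV: "P u \<in> V" if "u \<in> V" for u
    unfolding P_def using that by (intro Vdiff VR Vadd VW VWs[unfolded Ws_def[symmetric]]) (auto simp: Ws_def)
  have Psym: "inner x (P y) = inner (P x) y" for x y
    by (simp add: P_def inner_diff_right inner_diff_left inner_add_right inner_add_left adjW adjWs)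
  have Plin: "P (x - t *\<^sub>R y) = P x - t *\<^sub>R P y" for x y t
    by (simp add: P_def matrix_vector_mult_diff_distrib mvs algebra_simps)
  define g where "g u = inner u (P u)" for u
  have gf: "g u = m * (norm u)^2 - f u" for u
    by (simp add: g_def P_def inner_diff_right inner_add_right fWs f_def power2_norm_eq_inner)
  have gpos: "0 \<le> g u" if "u \<in> V" for u using fle[OF that] gf[of u] by simp
  have gv0: "g v0 = 0" using gf[of v0] nv0 m_def by simp
  define w where "w = P v0"
  have wV: "w \<in> V" using PV v0V w_def by simp
  have expand: "g (v0 - t *\<^sub>R w) = - 2 * t * (norm w)^2 + t^2 * g w" for t
  proof -
    have "g (v0 - t *\<^sub>R w) = inner (v0 - t *\<^sub>R w) (P v0 - t *\<^sub>R P w)" by (simp add: g_def Plin)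
    also have "\<dots> = inner v0 (P v0) - t * inner v0 (P w) - t * inner w (P v0) + t^2 * inner w (P w)"
      by (simp add: inner_diff_right inner_diff_left power2_eq_square algebra_simps)
    also have "inner v0 (P w) = inner w w" using Psym[of v0 w] w_def by (simp add: inner_commute)
    also have "inner w (P v0) = inner w w" using w_def by simp
    finally show ?thesis using gv0 by (simp add: g_def power2_norm_eq_inner)
  qed
  have w0: "w = 0"
  proof (rule ccontr)
    assume "w \<noteq> 0"
    define a where "a = (norm w)^2"
    define b where "b = g w"
    have a0: "a > 0" using \<open>w \<noteq> 0\<close> a_def by simp
    have b0: "b \<ge> 0" using gpos wV b_def by simp
    define t where "t = a / (b + 2)"
    have "0 \<le> g (v0 - t *\<^sub>R w)" using gpos Vdiff VR v0V wV by simp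
    then have "0 \<le> - 2 * t * a + t^2 * b" using expand a_def b_def by simp
    also have "- 2 * t * a + t^2 * b = t * (t * b - 2 * a)" by (simp add: power2_eq_square algebra_simps)
    finally have *: "0 \<le> t * (t * b - 2 * a)" .
    have tpos: "t > 0" using a0 b0 t_def by simp
    have "t * b < a" using a0 b0 by (simp add: t_def field_simps)
    then have "t * (t * b - 2 * a) < 0" using tpos a0 by (simp add: mult_pos_neg)
    then show False using * by simp
  qed
  then have h: "m *\<^sub>R v0 = (1/2) *\<^sub>R (W *v v0 + Ws *v v0)" using w_def by (simp add: P_def)
  then have "2 *\<^sub>R (m *\<^sub>R v0) = W *v v0 + Ws *v v0" by simp
  then have eq1: "W *v v0 + Ws *v v0 = (2*m) *\<^sub>R v0" by simp
  have WWs: "W *v (Ws *v x) = x" for x using unitary_inv2[OF U] Ws_def by simp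
  define M where "M = complex_of_real (2*m)"
  have eq2: "W *v (W *v v0) + v0 = M *s (W *v v0)"
  proof -
    have "W *v (W *v v0 + Ws *v v0) = W *v ((2*m) *\<^sub>R v0)" using eq1 by simp
    then show ?thesis by (simp add: matrix_vector_right_distrib WWs mvs M_def scaleR_as_s vector_scalar_commute)
  qed
  define r where "r = csqrt (M^2 - 4)"
  define z1 where "z1 = (M + r)/2"
  define z2 where "z2 = (M - r)/2"
  have zs: "z1 + z2 = M" by (simp add: z1_def z2_def field_simps)
  have zp: "z1 * z2 = 1"
  proof -
    have "r^2 = M^2 - 4" by (simp add: r_def)
    then show ?thesis by (simp add: z1_def z2_def field_simps power2_eq_square)
  qed
  define u where "u = W *v v0 - z2 *s v0"
  have uV: "u \<in> V" unfolding u_def by (intro Vdiff VW Vscale v0V)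
  have Wu: "W *v u = z1 *s u"
  proof -
    have "W *v u = W *v (W *v v0) - z2 *s (W *v v0)"
      by (simp add: u_def matrix_vector_mult_diff_distrib vector_scalar_commute)
    also have "\<dots> = M *s (W *v v0) - v0 - z2 *s (W *v v0)" using eq2 by (simp add: algebra_simps)
    also have "\<dots> = z1 *s u"
      by (simp add: u_def vec_eq_iff algebra_simps zs[symmetric] flip: zp)
    finally show ?thesis .
  qed
  show ?thesis
  proof (cases "u = 0")
    case False then show ?thesis using uV Wu by blast
  next
    case True
    then have "W *v v0 = z2 *s v0" by (simp add: u_def)
    moreover have "v0 \<noteq> 0" using nv0 by auto
    ultimately show ?thesis using v0V by blast
  qed
qed




definition ONE :: "complex^'n^'n \<Rightarrow> (complex^'n) set \<Rightarrow> bool" where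
  "ONE W E \<longleftrightarrow> finite E \<and> (\<forall>e\<in>E. \<forall>e'\<in>E. cinner e e' = (if e = e' then 1 else 0))
     \<and> (\<forall>e\<in>E. \<exists>z. W *v e = z *s e)"

lemma orth_card:
  fixes E :: "(complex^'n) set"
  assumes on: "\<forall>e\<in>E. \<forall>e'\<in>E. cinner e e' = (if e = e' then 1 else 0)"
  shows "finite E \<and> card E \<le> CARD('n)"
proof -
  define iE where "iE = (\<lambda>e. \<i> *s e) ` E"
  define E2 where "E2 = E \<union> iE"
  have ci1: "cinner (\<i> *s x) y = - \<i> * cinner x y" for x y :: "complex^'n"
    by (simp add: cinner_scale_left)
  have ci2: "cinner x (\<i> *s y) = \<i> * cinner x y" for x y :: "complex^'n"
    by (simp add: cinner_scale_right)
  have inj: "inj_on (\<lambda>e. \<i> *s e) (E :: (complex^'n) set)"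
    by (auto simp: inj_on_def vec_eq_iff)
  have inn: "inner x y = 0" if "x \<in> E2" "y \<in> E2" "x \<noteq> y" for x y
  proof -
    from that(1,2) consider (a) "x \<in> E" "y \<in> E"
      | (b) e' where "x \<in> E" "e' \<in> E" "y = \<i> *s e'"
      | (c) e where "e \<in> E" "x = \<i> *s e" "y \<in> E"
      | (d) e e' where "e \<in> E" "x = \<i> *s e" "e' \<in> E" "y = \<i> *s e'"
      unfolding E2_def iE_def by blast
    then have "Re (cinner x y) = 0"
    proof cases
      case a then show ?thesis using on that(3) by simp
    next
      case b
      have "cinner x e' = (if x = e' then 1 else 0)" using on b by simp
      then show ?thesis using b by (simp add: ci2)
    next
      case c
      have "cinner e y = (if e = y then 1 else 0)" using on c by simp
      then show ?thesis using c by (simp add: ci1)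
    next
      case d
      have "e \<noteq> e'" using d that(3) by auto
      then have "cinner e e' = 0" using on d by simp
      then show ?thesis using d by (simp add: ci1 ci2)
    qed
    then show ?thesis by (simp add: Re_cinner)
  qed
  have ne0: "e \<noteq> 0" if "e \<in> E" for e using on that by force
  have ine0: "\<i> *s e \<noteq> 0" if "e \<in> E" for e
  proof
    assume h: "\<i> *s e = 0"
    have "cinner e (\<i> *s e) = \<i>" using on that by (simp add: ci2)
    then show False using h by simp
  qed
  have "0 \<notin> E2" using ne0 ine0 unfolding E2_def iE_def by force
  moreover have "pairwise orthogonal E2"
    using inn by (auto simp: pairwise_def orthogonal_def)
  ultimately have "independent E2" by (simp add: pairwise_orthogonal_independent)
  then have "finite E2 \<and> card E2 \<le> DIM(complex^'n)" by (rule independent_bound)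
  then have fin2: "finite E2" and c2: "card E2 \<le> CARD('n) * 2" by (simp_all add: DIM_cart)
  have finE: "finite E" using fin2 E2_def by auto
  have disj: "E \<inter> iE = {}"
  proof (rule ccontr)
    assume "E \<inter> iE \<noteq> {}"
    then obtain e e' where e: "e \<in> E" "e' \<in> E" "e = \<i> *s e'" by (auto simp: iE_def)
    then have "cinner e' e = \<i> * cinner e' e'" by (simp add: ci2)
    then show False using on e by (auto split: if_splits)
  qed
  have "card E2 = card E + card iE" unfolding E2_def
    using disj finE iE_def by (simp add: card_Un_disjoint)
  also have "card iE = card E" using inj by (simp add: iE_def card_image)
  finally have "2 * card E \<le> CARD('n) * 2" using c2 by simp
  then show ?thesis using finE by simp
qed

lemma cinner_cont: "continuous_on UNIV (\<lambda>v. cinner e v)"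
  unfolding cinner_def by (intro continuous_intros)




lemma eigenbasis:
  fixes W :: "complex^'n^'n"
  assumes U: "unitary_cmat W"
  shows "\<exists>E. ONE W E \<and> (\<forall>v. v = (\<Sum>e\<in>E. cinner e v *s e))"
proof -
  have bnd: "\<forall>E. ONE W E \<longrightarrow> card E < CARD('n) + 1"
  proof (intro allI impI)
    fix E :: "(complex^'n) set" assume "ONE W E"
    then have "card E \<le> CARD('n)" using orth_card unfolding ONE_def by blast
    then show "card E < CARD('n) + 1" by simp
  qed
  have "ONE W {}" by (simp add: ONE_def)
  then obtain E where E: "ONE W E" and Emax: "\<forall>E'. ONE W E' \<longrightarrow> card E' \<le> card E"
    using ex_has_greatest_nat[of "ONE W" "{}" card "CARD('n) + 1"] bnd by blast
  have finE: "finite E" using E by (simp add: ONE_def)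
  have onE: "\<forall>e\<in>E. \<forall>e'\<in>E. cinner e e' = (if e = e' then 1 else 0)" using E by (simp add: ONE_def)
  define V where "V = {v. \<forall>e\<in>E. cinner e v = 0}"
  define Ws where "Ws = adjoint_cmat W"
  have Vadd: "x + y \<in> V" if "x \<in> V" "y \<in> V" for x y
    using that by (simp add: V_def cinner_add_right)
  have Vscale: "c *s x \<in> V" if "x \<in> V" for x c
    using that by (simp add: V_def cinner_scale_right)
  have "V = (\<Inter>e\<in>E. {v. cinner e v = 0})" by (auto simp: V_def)
  then have Vcl: "closed V"
    by (simp add: closed_INT closed_Collect_eq cinner_cont)
  have eig: "Ws *v e = cnj z *s e \<and> cnj z * z = 1" if "e \<in> E" "W *v e = z *s e" for e z
  proof -
    have "cinner (W *v e) (W *v e) = cinner e e" using unitary_cinner[OF U] by simp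
    then have zz: "cnj z * z = 1" using that onE by (simp add: cinner_scale_left cinner_scale_right mult.commute)
    have "Ws *v (W *v e) = e" using unitary_inv1[OF U] Ws_def by simp
    then have "z *s (Ws *v e) = e" using that by (simp add: vector_scalar_commute)
    then have "cnj z *s (z *s (Ws *v e)) = cnj z *s e" by simp
    then have "Ws *v e = cnj z *s e" using zz by (simp add: vector_smult_assoc)
    then show ?thesis using zz by simp
  qed
  have VW: "W *v x \<in> V" if "x \<in> V" for x
  proof -
    have "cinner e (W *v x) = 0" if "e \<in> E" for e
    proof -
      obtain z where z: "W *v e = z *s e" using E \<open>e \<in> E\<close> unfolding ONE_def by blast
      have "cinner e (W *v x) = cinner (Ws *v e) x" by (simp add: Ws_def cinner_adjoint2)
      also have "\<dots> = z * cinner e x" using eig[OF \<open>e \<in> E\<close> z] by (simp add: cinner_scale_left)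
      finally show ?thesis using \<open>x \<in> V\<close> \<open>e \<in> E\<close> by (simp add: V_def)
    qed
    then show ?thesis by (simp add: V_def)
  qed
  have VWs: "adjoint_cmat W *v x \<in> V" if "x \<in> V" for x
  proof -
    have "cinner e (adjoint_cmat W *v x) = 0" if "e \<in> E" for e
    proof -
      obtain z where z: "W *v e = z *s e" using E \<open>e \<in> E\<close> unfolding ONE_def by blast
      have "cinner e (adjoint_cmat W *v x) = cinner (W *v e) x" by (simp add: cinner_adjoint2)
      also have "\<dots> = cnj z * cinner e x" using z by (simp add: cinner_scale_left)
      finally show ?thesis using \<open>x \<in> V\<close> \<open>e \<in> E\<close> by (simp add: V_def)
    qed
    then show ?thesis by (simp add: V_def)
  qed
  have V0: "v = 0" if "v \<in> V" for v
  proof (rule ccontr)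
    assume "v \<noteq> 0"
    then obtain u z where uV: "u \<in> V" and u0: "u \<noteq> 0" and Wu: "W *v u = z *s u"
      using eigvec_exists[OF U Vadd Vscale Vcl VW VWs \<open>v \<in> V\<close>] by blast
    define e0 where "e0 = complex_of_real (1 / norm u) *s u"
    have e0V: "e0 \<in> V" using Vscale uV e0_def by simp
    have e01: "cinner e0 e0 = 1"
    proof -
      have "cinner e0 e0 = complex_of_real ((1/norm u)^2 * (norm u)^2)"
        unfolding e0_def by (simp only: cinner_s_self) (simp add: cinner_self norm_divide)
      then show ?thesis using u0 by (simp add: power_divide)
    qed
    have We0: "W *v e0 = z *s e0"
      by (simp add: e0_def vector_scalar_commute Wu vector_smult_assoc mult.commute)
    have e0E: "e0 \<notin> E" using e0V e01 by (auto simp: V_def)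
    have "ONE W (insert e0 E)"
      unfolding ONE_def
    proof (intro conjI ballI)
      show "finite (insert e0 E)" using finE by simp
    next
      fix e e' assume "e \<in> insert e0 E" "e' \<in> insert e0 E"
      then show "cinner e e' = (if e = e' then 1 else 0)"
      proof -
        have e0o: "cinner e0 x = 0" if "x \<in> E" for x
        proof -
          have "cinner x e0 = 0" using e0V that by (simp add: V_def)
          then show ?thesis by (metis cinner_cnj complex_cnj_zero)
        qed
        show ?thesis using onE e01 e0V e0E e0o \<open>e \<in> insert e0 E\<close> \<open>e' \<in> insert e0 E\<close>
          by (auto simp: V_def)
      qed
    next
      fix e assume "e \<in> insert e0 E"
      then show "\<exists>z. W *v e = z *s e" using We0 E by (auto simp: ONE_def)
    qed
    then have "card (insert e0 E) \<le> card E" using Emax by blast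
    then show False using e0E finE by simp
  qed
  have "v = (\<Sum>e\<in>E. cinner e v *s e)" for v
  proof -
    define r where "r = v - (\<Sum>e\<in>E. cinner e v *s e)"
    have "cinner e' r = 0" if "e' \<in> E" for e'
    proof -
      have "cinner e' (\<Sum>e\<in>E. cinner e v *s e) = (\<Sum>e\<in>E. cinner e v * cinner e' e)"
        by (simp add: cinner_sum_right cinner_scale_right)
      also have "\<dots> = (\<Sum>e\<in>E. if e' = e then cinner e v else 0)"
        using that onE by (intro sum.cong) auto
      also have "\<dots> = cinner e' v" using that finE by (simp add: sum.delta)
      finally show ?thesis by (simp add: r_def cinner_diff_right)
    qed
    then have "r \<in> V" by (simp add: V_def)
    then have "r = 0" using V0 by blast
    then show ?thesis using r_def by simp
  qed
  then show ?thesis using E by blast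
qed





lemma numrange_bound:
  fixes W :: "complex^'n^'n"
  assumes E: "ONE W E" and dec: "\<forall>v. v = (\<Sum>e\<in>E. cinner e v *s e)"
    and zf: "\<forall>e\<in>E. W *v e = zf e *s e"
    and bd: "\<forall>e\<in>E. Re (\<mu> * zf e) \<le> C"
  shows "Re (\<mu> * cinner v (W *v v)) \<le> C * (norm v)^2"
proof -
  define c where "c e = cinner e v" for e
  have cv: "cinner v e = cnj (c e)" for e by (simp add: c_def cinner_cnj)
  have dv: "v = (\<Sum>e\<in>E. c e *s e)" unfolding c_def by (rule dec[rule_format])
  have "W *v v = (\<Sum>e\<in>E. W *v (c e *s e))"
    by (subst dv) (rule vec.sum)
  also have "\<dots> = (\<Sum>e\<in>E. (c e * zf e) *s e)"
  proof (rule sum.cong[OF refl])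
    fix e assume "e \<in> E"
    then have "W *v e = zf e *s e" using zf by blast
    then show "W *v (c e *s e) = (c e * zf e) *s e"
      by (simp add: vector_scalar_commute vector_smult_assoc)
  qed
  finally have Wv: "W *v v = (\<Sum>e\<in>E. (c e * zf e) *s e)" .
  have ns: "cnj (c e) * c e = complex_of_real ((cmod (c e))^2)" for e
    by (metis complex_norm_square mult.commute)
  have "cinner v (W *v v) = (\<Sum>e\<in>E. (c e * zf e) * cnj (c e))"
    unfolding Wv by (simp add: cinner_sum_right cinner_scale_right cv)
  also have "\<dots> = (\<Sum>e\<in>E. complex_of_real ((cmod (c e))^2) * zf e)"
    by (rule sum.cong[OF refl]) (simp only: ns[symmetric], simp add: mult_ac)
  finally have cw: "cinner v (W *v v) = (\<Sum>e\<in>E. complex_of_real ((cmod (c e))^2) * zf e)" .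
  have "Re (\<mu> * cinner v (W *v v)) = (\<Sum>e\<in>E. (cmod (c e))^2 * Re (\<mu> * zf e))"
    unfolding cw sum_distrib_left Re_sum
    by (rule sum.cong[OF refl]) (simp add: algebra_simps)
  also have "\<dots> \<le> (\<Sum>e\<in>E. (cmod (c e))^2 * C)"
    using bd by (intro sum_mono mult_left_mono) auto
  also have "\<dots> = C * (\<Sum>e\<in>E. (cmod (c e))^2)" by (simp add: sum_distrib_left mult.commute)
  also have "(\<Sum>e\<in>E. (cmod (c e))^2) = (norm v)^2"
  proof -
    have "cinner v v = cinner v (\<Sum>e\<in>E. c e *s e)" using dv by (rule arg_cong)
    also have "\<dots> = (\<Sum>e\<in>E. c e * cnj (c e))"
      by (simp add: cinner_sum_right cinner_scale_right cv)
    also have "\<dots> = (\<Sum>e\<in>E. complex_of_real ((cmod (c e))^2))"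
      by (rule sum.cong[OF refl]) (simp only: ns[symmetric], simp add: mult.commute)
    also have "\<dots> = complex_of_real (\<Sum>e\<in>E. (cmod (c e))^2)" by simp
    finally have "complex_of_real ((norm v)^2) = complex_of_real (\<Sum>e\<in>E. (cmod (c e))^2)"
      by (simp only: cinner_self)
    then show ?thesis by (simp only: of_real_eq_iff)
  qed
  finally show ?thesis .
qed

lemma unitary_numrange:
  fixes W :: "complex^'n^'n"
  assumes U: "unitary_cmat W"
  shows "\<exists>\<mu>. cmod \<mu> = 1 \<and> (\<forall>v. Re (\<mu> * cinner v (W *v v)) \<le> cos (pi / CARD('n)) * (norm v)^2)"
proof -
  obtain E where E: "ONE W E" and dec: "\<forall>v. v = (\<Sum>e\<in>E. cinner e v *s e)"
    using eigenbasis[OF U] by blast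
  define zf where "zf e = (SOME z. W *v e = z *s e)" for e
  have zf: "\<forall>e\<in>E. W *v e = zf e *s e"
    using E unfolding ONE_def zf_def by (metis (mono_tags, lifting) someI_ex)
  have onE: "\<forall>e\<in>E. \<forall>e'\<in>E. cinner e e' = (if e = e' then 1 else 0)" using E by (simp add: ONE_def)
  have zn: "cmod (zf e) = 1" if "e \<in> E" for e
  proof -
    have "cinner (W *v e) (W *v e) = cinner e e" using unitary_cinner[OF U] by simp
    then have "cnj (zf e) * zf e = 1" using zf that onE by (simp add: cinner_scale_left cinner_scale_right mult.commute)
    then have "zf e * cnj (zf e) = 1" by (simp add: mult.commute)
    then have "complex_of_real ((cmod (zf e))^2) = 1" by (simp only: complex_norm_square)
    then have "(cmod (zf e))^2 = 1" by (metis of_real_eq_1_iff)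
    then show ?thesis using norm_ge_zero[of "zf e"] by (auto simp: power2_eq_1_iff)
  qed
  have finE: "finite E" using E by (simp add: ONE_def)
  have cE: "card E \<le> CARD('n)" using orth_card onE by blast
  have "card (zf ` E) \<le> CARD('n)" using cE card_image_le[OF finE, of zf] by linarith
  moreover have "1 \<le> CARD('n)" by (simp add: Suc_leI)
  ultimately obtain \<mu> where mu: "cmod \<mu> = 1" and b: "\<forall>z\<in>zf ` E. Re (\<mu> * z) \<le> cos (pi / CARD('n))"
    using gap_circle[of "zf ` E" "CARD('n)"] finE zn by auto
  show ?thesis
    using mu numrange_bound[OF E dec zf, of \<mu> "cos (pi / CARD('n))"] b by auto
qed




lemma sum_Plus_UNIV:
  "(\<Sum>i\<in>(UNIV::('a::finite + 'b::finite) set). f i) = (\<Sum>i\<in>UNIV. f (Inl i)) + (\<Sum>i\<in>UNIV. f (Inr i))"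
proof -
  have "sum f (UNIV <+> UNIV) = sum (f \<circ> Inl) UNIV + sum (f \<circ> Inr) UNIV"
    by (rule sum.Plus) auto
  then show ?thesis by (simp only: UNIV_Plus_UNIV comp_def)
qed

definition xl :: "complex^('n+'n) \<Rightarrow> complex^'n" where "xl x = (\<chi> i. x $ Inl i)"
definition xr :: "complex^('n+'n) \<Rightarrow> complex^'n" where "xr x = (\<chi> i. x $ Inr i)"
definition join :: "complex^'n \<Rightarrow> complex^'n \<Rightarrow> complex^('n+'n)" where
  "join a b = (\<chi> i. case i of Inl j \<Rightarrow> a $ j | Inr j \<Rightarrow> b $ j)"

lemma block_mv:
  "block2 P Q R S *v x = join (P *v xl x + Q *v xr x) (R *v xl x + S *v xr x)"
  unfolding vec_eq_iff
proof
  fix i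
  show "(block2 P Q R S *v x) $ i = join (P *v xl x + Q *v xr x) (R *v xl x + S *v xr x) $ i"
    by (cases i) (simp_all add: block2_def matrix_vector_mult_def join_def xl_def xr_def sum_Plus_UNIV)
qed

lemma norm_join: "(norm (join a b))^2 = (norm a)^2 + (norm b)^2"
  by (simp add: power2_norm_eq_inner inner_vec_def sum_Plus_UNIV join_def)

lemma norm_split: "(norm x)^2 = (norm (xl x))^2 + (norm (xr x))^2"
  by (simp add: power2_norm_eq_inner inner_vec_def sum_Plus_UNIV xl_def xr_def)

lemma cmat_scale_mv: "cmat_scale c B *v y = c *s (B *v y)"
  by (simp add: vec_eq_iff cmat_scale_def matrix_vector_mult_def sum_distrib_left mult.assoc)

lemma block_mm:
  "block2 P Q R S ** block2 P' Q' R' S' =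
   block2 (P ** P' + Q ** R') (P ** Q' + Q ** S') (R ** P' + S ** R') (R ** Q' + S ** S')"
  unfolding vec_eq_iff
proof (intro allI)
  fix i j
  show "(block2 P Q R S ** block2 P' Q' R' S') $ i $ j =
   block2 (P ** P' + Q ** R') (P ** Q' + Q ** S') (R ** P' + S ** R') (R ** Q' + S ** S') $ i $ j"
    by (cases i; cases j) (simp_all add: block2_def matrix_matrix_mult_def sum_Plus_UNIV)
qed

lemma cmat_scale_mm1: "cmat_scale c P ** Q = cmat_scale c (P ** Q)"
  by (simp add: vec_eq_iff cmat_scale_def matrix_matrix_mult_def sum_distrib_left mult.assoc)

lemma cmat_scale_mm2: "P ** cmat_scale c Q = cmat_scale c (P ** Q)"
  by (simp add: vec_eq_iff cmat_scale_def matrix_matrix_mult_def sum_distrib_left mult_ac)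

lemma cmat_scale_scale: "cmat_scale c (cmat_scale d P) = cmat_scale (c * d) P"
  by (simp add: vec_eq_iff cmat_scale_def mult.assoc)

lemma cmat_scale_1: "cmat_scale 1 P = P"
  by (simp add: vec_eq_iff cmat_scale_def)

lemma commute_part:
  fixes A B :: "complex^'n^'n"
  assumes "cmod l = 1"
  shows "block2 A (cmat_scale l B) B A ** block2 B A (cmat_scale (cnj l) A) B
       = block2 B A (cmat_scale (cnj l) A) B ** block2 A (cmat_scale l B) B A"
proof -
  have l1: "l * cnj l = 1" using complex_norm_square[of l] assms by simp
  then have l2: "cnj l * l = 1" by (simp add: mult.commute)
  show ?thesis
    by (simp add: block_mm cmat_scale_mm1 cmat_scale_mm2 cmat_scale_scale l1 l2 cmat_scale_1 add.commute)
qed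




lemma norm_add_sq: "(norm (a + b))^2 = (norm a)^2 + (norm b)^2 + 2 * inner a (b :: 'a :: real_inner)"
  by (simp add: power2_norm_eq_inner inner_add_left inner_add_right inner_commute)

lemma norm_s: "cmod c = 1 \<Longrightarrow> norm (c *s x) = norm (x :: complex^'n)"
proof -
  assume c: "cmod c = 1"
  have "complex_of_real ((norm (c *s x))^2) = complex_of_real ((norm x)^2)"
    using cinner_s_self[of c x] c by (simp add: cinner_self)
  then have "(norm (c *s x))^2 = (norm x)^2" by (metis of_real_eq_iff)
  then show ?thesis by (simp add: power2_eq_iff_nonneg)
qed

lemma sqrt_bound:
  assumes "(norm y)^2 \<le> K * (norm x)^2" "0 \<le> K"
  shows "norm y \<le> sqrt K * norm x"
proof -
  have "norm y = sqrt ((norm y)^2)" by simp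
  also have "\<dots> \<le> sqrt (K * (norm x)^2)" using assms by (intro real_sqrt_le_mono)
  also have "\<dots> = sqrt K * norm x" by (simp add: real_sqrt_mult)
  finally show ?thesis .
qed

lemma X_bound:
  fixes A B :: "complex^'n^'n"
  assumes UA: "unitary_cmat A" and UB: "unitary_cmat B"
  shows "\<exists>l. cmod l = 1 \<and> (\<forall>v. norm (l *s (adjoint_cmat A *v (B *v v)) + adjoint_cmat B *v (A *v v))
            \<le> 2 * cos (pi / (2 * CARD('n))) * norm v)"
proof -
  define W where "W = adjoint_cmat A ** B ** adjoint_cmat A ** B"
  have UW: "unitary_cmat W" unfolding W_def
    by (intro unitary_mult unitary_adjoint UA UB)
  obtain l where l1: "cmod l = 1" and lb: "\<forall>v. Re (l * cinner v (W *v v)) \<le> cos (pi / CARD('n)) * (norm v)^2"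
    using unitary_numrange[OF UW] by blast
  define n where "n = CARD('n)"
  have n1: "1 \<le> n" by (simp add: n_def Suc_leI)
  define k where "k = 2 * cos (pi / (2 * n))"
  have h2: "pi / (2 * real n) \<le> pi / 2" by (rule divide_left_mono) (use n1 in auto)
  have h1: "0 \<le> pi / (2 * real n)" by simp
  have cpos: "0 \<le> cos (pi / (2 * n))"
    using h1 h2 by (intro cos_ge_zero) linarith+
  have k0: "0 \<le> k" using cpos k_def by simp
  have cdbl: "cos (pi / n) = 2 * (cos (pi / (2 * n)))^2 - 1"
  proof -
    have "pi / n = 2 * (pi / (2 * n))" by simp
    then show ?thesis by (metis cos_double_cos)
  qed
  have "norm (l *s (adjoint_cmat A *v (B *v v)) + adjoint_cmat B *v (A *v v)) \<le> k * norm v" for v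
  proof -
    define p where "p = adjoint_cmat A *v (B *v v)"
    define q where "q = adjoint_cmat B *v (A *v v)"
    have np: "norm (l *s p) = norm v" using l1 unfolding p_def
      by (simp add: norm_s unitary_norm UB unitary_adjoint[OF UA])
    have nq: "norm q = norm v" unfolding q_def
      by (simp add: unitary_norm UA unitary_adjoint[OF UB])
    have "cinner p q = cinner (B *v p) (A *v v)" unfolding q_def by (simp add: cinner_adjoint2)
    also have "\<dots> = cinner (adjoint_cmat A *v (B *v p)) v" by (simp add: cinner_adjoint2)
    also have "adjoint_cmat A *v (B *v p) = W *v v"
      by (simp add: p_def W_def matrix_vector_mul_assoc matrix_mul_assoc)
    finally have pq: "cinner p q = cnj (cinner v (W *v v))" by (simp add: cinner_cnj)
    have "inner (l *s p) q = Re (cnj l * cinner p q)" by (simp add: cinner_scale_left flip: Re_cinner)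
    also have "\<dots> = Re (l * cinner v (W *v v))" unfolding pq
      by simp
    finally have ilq: "inner (l *s p) q \<le> cos (pi / n) * (norm v)^2" using lb n_def by simp
    have "(norm (l *s p + q))^2 = 2 * (norm v)^2 + 2 * inner (l *s p) q"
      by (simp add: norm_add_sq np nq)
    also have "\<dots> \<le> 2 * (norm v)^2 + 2 * (cos (pi / n) * (norm v)^2)" using ilq by simp
    also have "\<dots> = k^2 * (norm v)^2" by (simp add: cdbl k_def power2_eq_square algebra_simps)
    finally have "(norm (l *s p + q))^2 \<le> (k * norm v)^2" by (simp add: power_mult_distrib)
    then show ?thesis unfolding p_def q_def
      by (rule power2_le_imp_le) (simp add: k0)
  qed
  then show ?thesis using l1 k_def n_def by blast
qed

lemma key_inner:
  fixes A B :: "complex^'n^'n"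
  shows "Re (l * cinner (A *v x1) (B *v x2)) + inner (B *v x1) (A *v x2)
       = inner x1 (l *s (adjoint_cmat A *v (B *v x2)) + adjoint_cmat B *v (A *v x2))"
proof -
  have "inner x1 (l *s (adjoint_cmat A *v (B *v x2)) + adjoint_cmat B *v (A *v x2))
      = Re (l * cinner x1 (adjoint_cmat A *v (B *v x2))) + Re (cinner x1 (adjoint_cmat B *v (A *v x2)))"
    by (simp add: cinner_add_right cinner_scale_right flip: Re_cinner)
  also have "\<dots> = Re (l * cinner (A *v x1) (B *v x2)) + Re (cinner (B *v x1) (A *v x2))"
    by (simp add: cinner_adjoint2)
  finally show ?thesis by (simp add: Re_cinner)
qed

lemma lin1: "(a::real) + b + 2 * r + (a + b + 2 * i) = 2 * (a + b) + 2 * (r + i)"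
  by (simp add: algebra_simps)

lemma lin2: "(a::real) + b + 2 * i + (a + b + 2 * r) = 2 * (a + b) + 2 * (r + i)"
  by (simp add: algebra_simps)

lemma ST_bound:
  fixes A B :: "complex^'n^'n"
  assumes UA: "unitary_cmat A" and UB: "unitary_cmat B" and l1: "cmod l = 1" and k0: "0 \<le> k"
    and Xb: "\<forall>v. norm (l *s (adjoint_cmat A *v (B *v v)) + adjoint_cmat B *v (A *v v)) \<le> k * norm v"
  shows "norm (block2 A (cmat_scale l B) B A *v x) \<le> sqrt (2 + k) * norm x"
    and "norm (block2 B A (cmat_scale (cnj l) A) B *v x) \<le> sqrt (2 + k) * norm x"
proof -
  define x1 where "x1 = xl x"
  define x2 where "x2 = xr x"
  define X where "X = l *s (adjoint_cmat A *v (B *v x2)) + adjoint_cmat B *v (A *v x2)"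
  have nx: "(norm x)^2 = (norm x1)^2 + (norm x2)^2" using norm_split x1_def x2_def by blast
  have ki: "Re (l * cinner (A *v x1) (B *v x2)) + inner (B *v x1) (A *v x2) \<le> k * norm x1 * norm x2"
  proof -
    have "Re (l * cinner (A *v x1) (B *v x2)) + inner (B *v x1) (A *v x2) = inner x1 X"
      using key_inner X_def by simp
    also have "\<dots> \<le> norm x1 * norm X" by (rule norm_cauchy_schwarz)
    also have "\<dots> \<le> norm x1 * (k * norm x2)" using Xb X_def by (simp add: mult_left_mono)
    finally show ?thesis by (simp add: mult_ac)
  qed
  have am: "2 * (norm x1 * norm x2) \<le> (norm x1)^2 + (norm x2)^2"
    using sum_squares_bound[of "norm x1" "norm x2"] by (simp add: power2_eq_square)
  have fin: "2 * ((norm x1)^2 + (norm x2)^2) + 2 * (Re (l * cinner (A *v x1) (B *v x2)) + inner (B *v x1) (A *v x2))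
      \<le> (2 + k) * (norm x)^2"
  proof -
    have "2 * (Re (l * cinner (A *v x1) (B *v x2)) + inner (B *v x1) (A *v x2)) \<le> k * (2 * (norm x1 * norm x2))"
      using ki by (simp add: mult_ac)
    also have "\<dots> \<le> k * ((norm x1)^2 + (norm x2)^2)" by (rule mult_left_mono[OF am k0])
    finally show ?thesis using nx by (simp add: algebra_simps)
  qed
  have i1: "inner (A *v x1) (l *s (B *v x2)) = Re (l * cinner (A *v x1) (B *v x2))"
    by (simp add: cinner_scale_right flip: Re_cinner)
  have i2: "inner (cnj l *s (A *v x1)) (B *v x2) = Re (l * cinner (A *v x1) (B *v x2))"
    by (simp add: cinner_scale_left flip: Re_cinner)
  have nls: "norm (l *s y) = norm y" "norm (cnj l *s y) = norm y" for y :: "complex^'n"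
    using l1 by (simp_all add: norm_s)
  have nA: "norm (A *v y) = norm y" and nB: "norm (B *v y) = norm y" for y
    using UA UB by (simp_all add: unitary_norm)
  have e1: "(norm (B *v x1 + A *v x2))^2 = (norm x1)^2 + (norm x2)^2 + 2 * inner (B *v x1) (A *v x2)"
    by (simp only: norm_add_sq nA nB)
  have e2: "(norm (cnj l *s (A *v x1) + B *v x2))^2 = (norm x1)^2 + (norm x2)^2 + 2 * Re (l * cinner (A *v x1) (B *v x2))"
    by (simp only: norm_add_sq i2 nls nA nB)
  have e3: "(norm (A *v x1 + l *s (B *v x2)))^2 = (norm x1)^2 + (norm x2)^2 + 2 * Re (l * cinner (A *v x1) (B *v x2))"
    by (simp only: norm_add_sq i1 nls nA nB)
  have "(norm (block2 A (cmat_scale l B) B A *v x))^2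
      = (norm (A *v x1 + l *s (B *v x2)))^2 + (norm (B *v x1 + A *v x2))^2"
    by (simp add: block_mv cmat_scale_mv norm_join x1_def x2_def)
  also have "\<dots> = 2 * ((norm x1)^2 + (norm x2)^2) + 2 * (Re (l * cinner (A *v x1) (B *v x2)) + inner (B *v x1) (A *v x2))"
    unfolding e1 e3 by (rule lin1)
  finally have "(norm (block2 A (cmat_scale l B) B A *v x))^2 \<le> (2 + k) * (norm x)^2"
    using fin by simp
  then show "norm (block2 A (cmat_scale l B) B A *v x) \<le> sqrt (2 + k) * norm x"
    by (rule sqrt_bound) (use k0 in simp)
  have "(norm (block2 B A (cmat_scale (cnj l) A) B *v x))^2
      = (norm (B *v x1 + A *v x2))^2 + (norm (cnj l *s (A *v x1) + B *v x2))^2"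
    by (simp add: block_mv cmat_scale_mv norm_join x1_def x2_def)
  also have "\<dots> = 2 * ((norm x1)^2 + (norm x2)^2) + 2 * (Re (l * cinner (A *v x1) (B *v x2)) + inner (B *v x1) (A *v x2))"
    unfolding e1 e2 by (rule lin2)
  finally have "(norm (block2 B A (cmat_scale (cnj l) A) B *v x))^2 \<le> (2 + k) * (norm x)^2"
    using fin by simp
  then show "norm (block2 B A (cmat_scale (cnj l) A) B *v x) \<le> sqrt (2 + k) * norm x"
    by (rule sqrt_bound) (use k0 in simp)
qed

theorem theoremA1:
  fixes A B :: "complex^'n^'n"
  assumes "unitary_cmat A" and "unitary_cmat B"
  shows "(\<forall>l\<in>sphere (0::complex) 1.
            block2 A (cmat_scale l B) B A ** block2 B A (cmat_scale (cnj l) A) B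
          = block2 B A (cmat_scale (cnj l) A) B ** block2 A (cmat_scale l B) B A)
     \<and> (INF l\<in>sphere (0::complex) 1.
          max (op_norm (block2 A (cmat_scale l B) B A)) (op_norm (block2 B A (cmat_scale (cnj l) A) B)))
       \<le> sqrt (2 + 2 * sin (pi / 2 * (1 - 1 / real CARD('n))))"
proof
  show "\<forall>l\<in>sphere (0::complex) 1.
            block2 A (cmat_scale l B) B A ** block2 B A (cmat_scale (cnj l) A) B
          = block2 B A (cmat_scale (cnj l) A) B ** block2 A (cmat_scale l B) B A"
    by (auto intro: commute_part)
next
  define n where "n = CARD('n)"
  have n1: "1 \<le> n" by (simp add: n_def Suc_leI)
  define k where "k = 2 * cos (pi / (2 * n))"
  have h2: "pi / (2 * real n) \<le> pi / 2" by (rule divide_left_mono) (use n1 in auto)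
  have h1: "0 \<le> pi / (2 * real n)" by simp
  have cpos: "0 \<le> cos (pi / (2 * n))"
    using h1 h2 by (intro cos_ge_zero) linarith+
  have k0: "0 \<le> k" unfolding k_def using cpos by simp
  obtain l where l1: "cmod l = 1"
    and Xb: "\<forall>v. norm (l *s (adjoint_cmat A *v (B *v v)) + adjoint_cmat B *v (A *v v)) \<le> k * norm v"
    using X_bound[OF assms] k_def n_def by blast
  have o1: "op_norm (block2 A (cmat_scale l B) B A) \<le> sqrt (2 + k)"
    unfolding op_norm_def by (rule onorm_le) (rule ST_bound(1)[OF assms l1 k0 Xb])
  have o2: "op_norm (block2 B A (cmat_scale (cnj l) A) B) \<le> sqrt (2 + k)"
    unfolding op_norm_def by (rule onorm_le) (rule ST_bound(2)[OF assms l1 k0 Xb])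
  have eq: "sin (pi / 2 * (1 - 1 / real CARD('n))) = cos (pi / real (2 * n))"
  proof -
    have e: "pi / 2 * (1 - 1 / real CARD('n)) = pi / 2 - pi / real (2 * n)"
      by (simp add: n_def field_simps)
    show ?thesis unfolding e using sin_cos_eq[of "pi / 2 - pi / real (2 * n)"] by simp
  qed
  have bdd: "bdd_below ((\<lambda>l. max (op_norm (block2 A (cmat_scale l B) B A))
              (op_norm (block2 B A (cmat_scale (cnj l) A) B))) ` sphere 0 1)"
    by (rule bdd_belowI[of _ 0])
      (auto simp: op_norm_def intro: max.coboundedI1 onorm_pos_le matrix_vector_mul_bounded_linear)
  have "l \<in> sphere (0::complex) 1" using l1 by simp
  then show "(INF l\<in>sphere (0::complex) 1.
          max (op_norm (block2 A (cmat_scale l B) B A)) (op_norm (block2 B A (cmat_scale (cnj l) A) B)))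
       \<le> sqrt (2 + 2 * sin (pi / 2 * (1 - 1 / real CARD('n))))"
    using o1 o2 eq k_def by (intro cINF_lower2[OF bdd]) auto
qed


end
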